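(* Let $L\ge1$ and $n\ge2$ be integers, let $0<f_s<f_c<f_p$ with $f_c=\frac{f_p-f_s}{n-1}$, let $M_1=-\lfloor L/2\rfloor$, $M_2=\lfloor (L-1)/2\rfloor$, and for $\xi\in\{1,\dots,nL\}$ let $\mathcal{F}(\xi)=\big(\lceil \xi/n\rceil-\lfloor L/2\rfloor-1\big)f_p+\big((\xi-1)\bmod n\big)f_c$ and $I_\xi=[\mathcal{F}(\xi),\mathcal{F}(\xi)+f_s]$. Let $N_{\mathrm{sig}}\ge1$ and let $f_1^{\min}<f_1^{\max}<f_2^{\min}<\dots<f_{N_{\mathrm{sig}}}^{\min}<f_{N_{\mathrm{sig}}}^{\max}$ be reals in $[M_1f_p,(M_2+1)f_p]$, with $B_j=f_j^{\max}-f_j^{\min}$, $\mathcal{B}=\sum_{j}B_j$ and $\mathcal{T}=\bigcup_j[f_j^{\min},f_j^{\max})$. Let $\Sigma=\{\xi\in\{1,\dots,nL\}: I_\xi\cap\mathcal{T} \text{ has positive length}\}$. If $$2\sum_{j=1}^{N_{\mathrm{sig}}}\Big(n\big\lfloor \tfrac{B_j}{f_p}\big\rfloor+\Big\lceil \tfrac{\operatorname{mod}(B_j,f_p)}{f_c}\Big\rceil+1\Big)f_s+2N_{\mathrm{sig}}f_c\le\mathcal{B},$$ then $$2|\Sigma|\,f_s+2N_{\mathrm{sig}}f_c\le\mathcal{B}.$$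
   Context: $\operatorname{mod}(B,f_p)=B-f_p\lfloor B/f_p\rfloor$. Row $\xi$ of the signal matrix represents the spectrum on $I_\xi$, so $\Sigma$ plays the role of the row support $\operatorname{supp}(\mathbf{X})$ of the signal matrix. The quantity $2|\Sigma|f_s+\mathcal{B}+2N_{\mathrm{sig}}f_c$ is an upper bound on the overall sampling rate of the scheme, and the conclusion states it is at most $2\mathcal{B}$. *)

theory Defs
  imports "HOL-Analysis.Analysis"
begin

definition chanF :: "nat \<Rightarrow> nat \<Rightarrow> real \<Rightarrow> real \<Rightarrow> nat \<Rightarrow> real" where
  "chanF L n fp fc xi =
     real_of_int (\<lceil>real xi / real n\<rceil> - int (L div 2) - 1) * fp
     + real ((xi - 1) mod n) * fc"

definition chanI :: "nat \<Rightarrow> nat \<Rightarrow> real \<Rightarrow> real \<Rightarrow> real \<Rightarrow> nat \<Rightarrow> real set" where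
  "chanI L n fp fc fs xi = {chanF L n fp fc xi .. chanF L n fp fc xi + fs}"

definition sigT :: "nat \<Rightarrow> (nat \<Rightarrow> real) \<Rightarrow> (nat \<Rightarrow> real) \<Rightarrow> real set" where
  "sigT N fmin fmax = (\<Union>j\<in>{1..N}. {fmin j ..< fmax j})"

definition activeSet :: "nat \<Rightarrow> nat \<Rightarrow> real \<Rightarrow> real \<Rightarrow> real \<Rightarrow> nat \<Rightarrow> (nat \<Rightarrow> real) \<Rightarrow> (nat \<Rightarrow> real) \<Rightarrow> nat set" where
  "activeSet L n fp fc fs N fmin fmax =
     {xi \<in> {1..n*L}. emeasure lborel (chanI L n fp fc fs xi \<inter> sigT N fmin fmax) > 0}"

definition rmod :: "real \<Rightarrow> real \<Rightarrow> real" where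
  "rmod B fp = B - fp * real_of_int \<lfloor>B / fp\<rfloor>"

end

theory Submission
  imports Defs
begin

definition gg :: "nat \<Rightarrow> real \<Rightarrow> real \<Rightarrow> nat \<Rightarrow> real" where
  "gg n fp fc m = real (m div n) * fp + real (m mod n) * fc"

lemma gg_period:
  assumes "n > 0" shows "gg n fp fc (m + n*q) = gg n fp fc m + real q * fp"
  using assms by (simp add: gg_def algebra_simps)

lemma gg_step:
  assumes n: "n \<ge> 2" and fs: "0 < fs" "fs < fc" and fp: "fp = real (n-1) * fc + fs"
    and t: "1 \<le> t" "t \<le> n"
  shows "gg n fp fc (m + t) - gg n fp fc m \<ge> real (t - 1) * fc + fs"
proof -
  define d e where "d = m div n" and "e = m mod n"
  have m: "m = d*n + e" and e: "e < n" using n by (auto simp: d_def e_def)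
  show ?thesis
  proof (cases "e + t < n")
    case True
    have mt: "m + t = (e + t) + n*d" using m by simp
    have "(m+t) div n = d" "(m+t) mod n = e + t" using True n unfolding mt by simp_all
    moreover have "m div n = d" "m mod n = e" by (auto simp: d_def e_def)
    ultimately have "gg n fp fc (m + t) - gg n fp fc m = real t * fc" by (simp add: gg_def algebra_simps)
    moreover have "real (t - 1) * fc + fs \<le> real t * fc" using t fs by (simp add: of_nat_diff algebra_simps)
    ultimately show ?thesis by simp
  next
    case False
    have mt: "m + t = (e + t - n) + n*(d+1)" using False m by simp
    have "e + t - n < n" using e t by simp
    moreover have "((e+t-n) + n*(d+1)) div n = (d+1) + (e+t-n) div n" using n by (intro div_mult_self2) simp
    moreover have "((e+t-n) + n*(d+1)) mod n = (e+t-n) mod n" by (rule mod_mult_self2)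
    ultimately have "(m+t) div n = d+1" "(m+t) mod n = e + t - n" unfolding mt by simp_all
    moreover have "m div n = d" "m mod n = e" by (auto simp: d_def e_def)
    ultimately have "gg n fp fc (m + t) - gg n fp fc m = fp + (real (e + t - n) - real e) * fc" by (simp add: gg_def algebra_simps)
    also have "\<dots> = real (t - 1) * fc + fs" using False t n fp by (simp add: of_nat_diff algebra_simps)
    finally show ?thesis by simp
  qed
qed

lemma gg_mono:
  assumes n: "n \<ge> 2" and fs: "0 < fs" "fs < fc" and fp: "fp = real (n-1) * fc + fs"
    and "m \<le> m'"
  shows "gg n fp fc m \<le> gg n fp fc m'"
proof -
  have "gg n fp fc i < gg n fp fc (Suc i)" for i
    using gg_step[OF n fs fp, of 1 i] n fs by simp
  hence "strict_mono (gg n fp fc)" by (rule strict_monoI_Suc)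
  thus ?thesis using assms(5) by (simp add: strict_mono_less_eq)
qed

lemma count_le:
  assumes n: "n \<ge> 2" and fs: "0 < fs" "fs < fc" and fp: "fp = real (n-1) * fc + fs"
    and ab: "a < b"
  shows "int (card {m\<in>{..<K}. a - fs < c + gg n fp fc m \<and> c + gg n fp fc m < b})
     \<le> int n * \<lfloor>(b-a)/fp\<rfloor> + \<lceil>rmod (b-a) fp / fc\<rceil> + 1"
proof -
  define S where "S = {m\<in>{..<K}. a - fs < c + gg n fp fc m \<and> c + gg n fp fc m < b}"
  define B where "B = b - a"
  define r where "r = rmod B fp"
  have fc0: "fc > 0" using fs by simp
  have fp0: "fp > 0" using fp fs n by (simp add: add_nonneg_pos)
  have B0: "B > 0" using ab B_def by simp
  have fl0: "\<lfloor>B/fp\<rfloor> \<ge> 0" using B0 fp0 by simp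
  define q where "q = nat \<lfloor>B/fp\<rfloor>"
  have qeq: "real q = real_of_int \<lfloor>B/fp\<rfloor>" using fl0 q_def by simp
  have Bq: "B = real q * fp + r" using qeq r_def rmod_def by simp
  have l1: "real_of_int \<lfloor>B/fp\<rfloor> * fp \<le> B" and l2: "B < (real_of_int \<lfloor>B/fp\<rfloor> + 1) * fp"
    by (rule floor_divide_lower[OF fp0], rule floor_divide_upper[OF fp0])
  have l3: "(real_of_int \<lfloor>B/fp\<rfloor> + 1) * fp = real_of_int \<lfloor>B/fp\<rfloor> * fp + fp" by (simp add: distrib_right)
  have l4: "real q * fp = real_of_int \<lfloor>B/fp\<rfloor> * fp" using qeq by simp
  have r0: "0 \<le> r" and rfp: "r < fp" using l1 l2 l3 l4 Bq by linarith+
  have ce0: "\<lceil>r/fc\<rceil> \<ge> 0" proof -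
    have "0 \<le> r / fc" using r0 fc0 by simp
    thus ?thesis by linarith
  qed
  define u where "u = nat \<lceil>r/fc\<rceil>"
  have ueq: "real u = real_of_int \<lceil>r/fc\<rceil>" using ce0 u_def by simp
  have "r / fc \<le> real u" using ueq by linarith
  hence ur: "r \<le> real u * fc" using fc0 by (simp add: field_simps)
  have "fp < real n * fc" using fp fs n by (simp add: of_nat_diff algebra_simps)
  hence "r / fc < real n" using rfp fc0 by (simp add: field_simps)
  hence "real u < real n + 1" using ueq by linarith
  hence un: "u \<le> n" by simp
  have main: "int (card S) \<le> int (n*q + u) + 1"
  proof (cases "S = {}")
    case True thus ?thesis by simp
  next
    case False
    have finS: "finite S" unfolding S_def by simp
    define m0 where "m0 = Min S"
    define m1 where "m1 = Max S"
    have m0S: "m0 \<in> S" and m1S: "m1 \<in> S" using finS False by (simp_all add: m0_def m1_def)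
    have sub: "S \<subseteq> {m0..m1}" using finS m0_def m1_def by auto
    hence "card S \<le> card {m0..m1}" by (intro card_mono) simp_all
    hence cS: "card S \<le> m1 + 1 - m0" by simp
    have m01: "m0 \<le> m1" using sub m0S by auto
    have gap: "gg n fp fc m1 - gg n fp fc m0 < B + fs" using m0S m1S unfolding S_def B_def by auto
    have "m1 - m0 \<le> n*q + u"
    proof (rule ccontr)
      assume "\<not> ?thesis"
      hence k: "m0 + (n*q + u + 1) \<le> m1" by simp
      show False
      proof (cases "u + 1 \<le> n")
        case True
        have "gg n fp fc (m0 + n*q + (u+1)) - gg n fp fc (m0 + n*q) \<ge> real (u+1-1) * fc + fs"
          by (rule gg_step[OF n fs fp]) (use True in auto)
        moreover have "gg n fp fc (m0 + n*q) = gg n fp fc m0 + real q * fp" using n by (simp add: gg_period)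
        moreover have "gg n fp fc (m0 + n*q + (u+1)) \<le> gg n fp fc m1"
          by (rule gg_mono[OF n fs fp]) (use k in simp)
        ultimately show False using gap Bq ur by simp
      next
        case False
        hence "u = n" using un by simp
        have "gg n fp fc (Suc m0) - gg n fp fc m0 \<ge> real (1-1) * fc + fs"
          using gg_step[OF n fs fp, of 1 m0] n by simp
        moreover have "gg n fp fc (Suc m0 + n*(q+1)) = gg n fp fc (Suc m0) + real (q+1) * fp" using n by (simp only: gg_period)
        moreover have "gg n fp fc (Suc m0 + n*(q+1)) \<le> gg n fp fc m1"
          by (rule gg_mono[OF n fs fp]) (use k \<open>u = n\<close> in simp)
        ultimately show False using gap Bq rfp by (simp add: algebra_simps)
      qed
    qed
    thus ?thesis using cS m01 by linarith
  qed
  show ?thesis using main unfolding S_def B_def[symmetric] r_def[symmetric]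
    using u_def q_def ce0 fl0 by simp
qed

lemma ceil_div:
  assumes "n > 0" "xi \<ge> 1"
  shows "\<lceil>real xi / real n\<rceil> = int ((xi - 1) div n) + 1"
proof -
  define d e where "d = (xi - 1) div n" and "e = (xi - 1) mod n"
  have x: "xi = d*n + e + 1" using assms by (simp add: d_def e_def)
  have e: "e < n" using assms by (simp add: e_def)
  have "real d * real n < real xi" "real xi \<le> (real d + 1) * real n"
    using x e by (simp_all add: algebra_simps)
  hence "real d < real xi / real n" "real xi / real n \<le> real d + 1"
    using assms by (simp_all add: field_simps)
  hence "\<lceil>real xi / real n\<rceil> = int d + 1" by (simp add: ceiling_eq_iff)
  thus ?thesis by (simp add: d_def)
qed

lemma chanF_eq:
  assumes "n > 0" "xi \<ge> 1"
  shows "chanF L n fp fc xi = - real (L div 2) * fp + gg n fp fc (xi - 1)"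
  unfolding chanF_def gg_def ceil_div[OF assms] by (simp add: algebra_simps)

lemma active_meets:
  assumes "emeasure lborel ({s..s+fs} \<inter> sigT N fmin fmax) > 0"
  shows "\<exists>j\<in>{1..N}. fmin j - fs < s \<and> s < fmax j"
proof (rule ccontr)
  assume H: "\<not> ?thesis"
  have "{s..s+fs} \<inter> sigT N fmin fmax \<subseteq> {s+fs}"
  proof
    fix x assume x: "x \<in> {s..s+fs} \<inter> sigT N fmin fmax"
    then obtain j where j: "j \<in> {1..N}" "fmin j \<le> x" "x < fmax j" by (auto simp: sigT_def)
    from H j(1) have "fmin j - fs \<ge> s \<or> s \<ge> fmax j" by force
    thus "x \<in> {s+fs}" using x j by auto
  qed
  hence "emeasure lborel ({s..s+fs} \<inter> sigT N fmin fmax) \<le> emeasure lborel {s+fs}"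
    by (intro emeasure_mono) auto
  thus False using assms by simp
qed

theorem theorem1:
  fixes L n N :: nat and fs fc fp :: real and fmin fmax :: "nat \<Rightarrow> real"
  assumes "L \<ge> 1" and "n \<ge> 2"
    and "0 < fs" and "fs < fc" and "fc < fp"
    and "fc = (fp - fs) / real (n - 1)"
    and "N \<ge> 1"
    and "\<And>j. j \<in> {1..N} \<Longrightarrow> fmin j < fmax j"
    and "\<And>j. j \<in> {1..<N} \<Longrightarrow> fmax j < fmin (j + 1)"
    and "\<And>j. j \<in> {1..N} \<Longrightarrow>
           - real (L div 2) * fp \<le> fmin j \<and> fmax j \<le> (real ((L - 1) div 2) + 1) * fp"
    and "2 * (\<Sum>j=1..N. real_of_int (int n * \<lfloor>(fmax j - fmin j) / fp\<rfloor>
                 + \<lceil>rmod (fmax j - fmin j) fp / fc\<rceil> + 1) * fs)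
         + 2 * real N * fc \<le> (\<Sum>j=1..N. fmax j - fmin j)"
  shows "2 * real (card (activeSet L n fp fc fs N fmin fmax)) * fs + 2 * real N * fc
         \<le> (\<Sum>j=1..N. fmax j - fmin j)"
proof -
  have n: "n \<ge> 2" and fs: "0 < fs" "fs < fc" using assms by auto
  have n1: "real (n - 1) > 0" using n by simp
  have fp: "fp = real (n-1) * fc + fs" using assms(6) n1 by (simp add: field_simps)
  have n0: "n > 0" using n by simp
  define c where "c = - real (L div 2) * fp"
  define S where "S j = {m\<in>{..<n*L}. fmin j - fs < c + gg n fp fc m \<and> c + gg n fp fc m < fmax j}" for j
  define bd where "bd j = int n * \<lfloor>(fmax j - fmin j) / fp\<rfloor> + \<lceil>rmod (fmax j - fmin j) fp / fc\<rceil> + 1" for j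
  have sub: "activeSet L n fp fc fs N fmin fmax \<subseteq> (\<Union>j\<in>{1..N}. Suc ` S j)"
  proof
    fix xi assume xi: "xi \<in> activeSet L n fp fc fs N fmin fmax"
    hence xi1: "xi \<in> {1..n*L}" and pos: "emeasure lborel (chanI L n fp fc fs xi \<inter> sigT N fmin fmax) > 0"
      by (auto simp: activeSet_def)
    obtain j where j: "j \<in> {1..N}" "fmin j - fs < chanF L n fp fc xi" "chanF L n fp fc xi < fmax j"
      using active_meets[OF pos[unfolded chanI_def]] by blast
    have "chanF L n fp fc xi = c + gg n fp fc (xi - 1)" using chanF_eq[OF n0, of xi] xi1 c_def by simp
    hence "xi - 1 \<in> S j" using j xi1 by (auto simp: S_def)
    moreover have "xi = Suc (xi - 1)" using xi1 by simp
    ultimately show "xi \<in> (\<Union>j\<in>{1..N}. Suc ` S j)" using j(1) by blast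
  qed
  have "card (activeSet L n fp fc fs N fmin fmax) \<le> card (\<Union>j\<in>{1..N}. Suc ` S j)"
    by (rule card_mono[OF _ sub]) (simp add: S_def)
  also have "\<dots> \<le> (\<Sum>j\<in>{1..N}. card (Suc ` S j))" by (rule card_UN_le) simp
  also have "\<dots> = (\<Sum>j\<in>{1..N}. card (S j))" by (simp add: card_image)
  finally have c1: "real (card (activeSet L n fp fc fs N fmin fmax)) \<le> (\<Sum>j\<in>{1..N}. real (card (S j)))"
    by (metis of_nat_le_iff of_nat_sum)
  have "real (card (S j)) \<le> real_of_int (bd j)" if "j \<in> {1..N}" for j
  proof -
    have "int (card (S j)) \<le> bd j" unfolding S_def bd_def
      by (rule count_le[OF n fs fp]) (use assms(8) that in auto)
    thus ?thesis by linarith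
  qed
  hence "(\<Sum>j\<in>{1..N}. real (card (S j))) \<le> (\<Sum>j\<in>{1..N}. real_of_int (bd j))" by (rule sum_mono)
  with c1 have "real (card (activeSet L n fp fc fs N fmin fmax)) * fs \<le> (\<Sum>j\<in>{1..N}. real_of_int (bd j)) * fs"
    using fs by (intro mult_right_mono) auto
  also have "\<dots> = (\<Sum>j=1..N. real_of_int (bd j) * fs)" by (simp add: sum_distrib_right)
  finally show ?thesis using assms(11) unfolding bd_def by linarith
qed

end
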